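(* Let $X$ be a complex torus of dimension $g$, with $\omega \in \mathrm{H}^2(X, \mathbf{Z}/n)$. Suppose that $e_1, \dots, e_{2g}$ is a basis for $\mathrm{H}^1(X, \mathbf{Z})$ such that \[ \omega = \sum_{i = 1}^r a_i e_{i} \wedge e_{i + g}, \] for $0 \neq a_i \in \mathbf{Z}/n$ and $0 \leq r \leq g$. Then \[ \mathrm{Ann}(\omega) = \prod_{i = 1}^r \mathrm{Ann}_{\mathbf{Z}}(a_i). \]
   Context: $\mathrm{Ann}(\omega)$ is the least degree of a finite isogeny $f:X' \to X$ such that $f^*\omega = 0$. For $a \in \mathbf{Z}/n$, $\mathrm{Ann}_{\mathbf{Z}}(a)$ is the positive generator of the annihilator ideal of $a$ in $\mathbf{Z}$. *)

theory Defs
  imports "HOL-Number_Theory.Cong"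
begin

text \<open>Model: X = C^g / Lambda with Lambda = Z^(2g), vectors of Z^d are functions
 nat => int supported on {..<d}.  H^1(X,Z) = Hom(Lambda,Z); H^2(X,Z/n) = alternating
 Z/n-valued forms on Lambda.  A finite isogeny X' -> X is V/Lambda' -> V/Lambda for a
 finite-index sublattice Lambda' of Lambda; its degree is the index, and pullback
 is restriction of forms to Lambda'.\<close>

definition ZV :: "nat \<Rightarrow> (nat \<Rightarrow> int) set" where
  "ZV d = {x. \<forall>j\<ge>d. x j = 0}"

definition sublattice :: "nat \<Rightarrow> (nat \<Rightarrow> int) set \<Rightarrow> bool" where
  "sublattice d L \<longleftrightarrow> L \<subseteq> ZV d \<and> (\<lambda>_. 0) \<in> L \<and>
     (\<forall>x\<in>L. \<forall>y\<in>L. (\<lambda>j. x j + y j) \<in> L) \<and> (\<forall>x\<in>L. (\<lambda>j. - x j) \<in> L)"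

definition lattice_cosets :: "nat \<Rightarrow> (nat \<Rightarrow> int) set \<Rightarrow> (nat \<Rightarrow> int) set set" where
  "lattice_cosets d L = (\<lambda>v. (\<lambda>x. (\<lambda>j. v j + x j)) ` L) ` ZV d"

definition finite_index_sublattice :: "nat \<Rightarrow> (nat \<Rightarrow> int) set \<Rightarrow> bool" where
  "finite_index_sublattice d L \<longleftrightarrow> sublattice d L \<and> finite (lattice_cosets d L)"

definition lattice_index :: "nat \<Rightarrow> (nat \<Rightarrow> int) set \<Rightarrow> nat" where
  "lattice_index d L = card (lattice_cosets d L)"

text \<open>Ann(omega): least degree of a finite isogeny killing omega (omega a Z/n-valued
  form on Z^d, values represented by integers modulo n).\<close>
definition Ann_form :: "nat \<Rightarrow> nat \<Rightarrow> ((nat \<Rightarrow> int) \<Rightarrow> (nat \<Rightarrow> int) \<Rightarrow> int) \<Rightarrow> nat" where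
  "Ann_form n d \<omega> = (LEAST m. \<exists>L. finite_index_sublattice d L \<and> lattice_index d L = m \<and>
       (\<forall>x\<in>L. \<forall>y\<in>L. [\<omega> x y = 0] (mod int n)))"

definition Ann_Z :: "nat \<Rightarrow> int \<Rightarrow> nat" where
  "Ann_Z n a = (LEAST m. m > 0 \<and> [int m * a = 0] (mod int n))"

definition lin_fun :: "nat \<Rightarrow> (nat \<Rightarrow> nat \<Rightarrow> int) \<Rightarrow> nat \<Rightarrow> (nat \<Rightarrow> int) \<Rightarrow> int" where
  "lin_fun d E i x = (\<Sum>j<d. E i j * x j)"

text \<open>e_0,...,e_(d-1) (rows of E) form a Z-basis of Hom(Z^d,Z).\<close>
definition dual_basis :: "nat \<Rightarrow> (nat \<Rightarrow> nat \<Rightarrow> int) \<Rightarrow> bool" where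
  "dual_basis d E \<longleftrightarrow>
     bij_betw (\<lambda>x i. if i < d then lin_fun d E i x else 0) (ZV d) (ZV d)"

end

theory Submission
  imports Defs
begin

definition Vk :: "nat \<Rightarrow> (nat \<Rightarrow> nat) \<Rightarrow> (nat \<Rightarrow> int) set" where
  "Vk k m = {\<alpha>. (\<forall>i<k. 0 \<le> \<alpha> i \<and> \<alpha> i < int (m i)) \<and> (\<forall>i\<ge>k. \<alpha> i = 0)}"

definition vadd :: "(nat \<Rightarrow> nat) \<Rightarrow> (nat \<Rightarrow> int) \<Rightarrow> (nat \<Rightarrow> int) \<Rightarrow> (nat \<Rightarrow> int)" where
  "vadd m x y = (\<lambda>i. (x i + y i) mod int (m i))"

definition vneg :: "(nat \<Rightarrow> nat) \<Rightarrow> (nat \<Rightarrow> int) \<Rightarrow> (nat \<Rightarrow> int)" where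
  "vneg m x = (\<lambda>i. (- x i) mod int (m i))"

definition vgrp :: "nat \<Rightarrow> (nat \<Rightarrow> nat) \<Rightarrow> (nat \<Rightarrow> int) set \<Rightarrow> bool" where
  "vgrp k m S \<longleftrightarrow> S \<subseteq> Vk k m \<and> (\<forall>x\<in>S. \<forall>y\<in>S. vadd m x y \<in> S) \<and> (\<forall>x\<in>S. vneg m x \<in> S)"

definition vorth :: "nat \<Rightarrow> (nat \<Rightarrow> int) \<Rightarrow> nat \<Rightarrow> (nat \<Rightarrow> int) set \<Rightarrow> (nat \<Rightarrow> int) set \<Rightarrow> bool" where
  "vorth k a n S T \<longleftrightarrow> (\<forall>x\<in>S. \<forall>y\<in>T. int n dvd (\<Sum>i<k. a i * x i * y i))"

lemma Vk_Suc:
  "Vk (Suc k) m = (\<lambda>(x, c). x(k := c)) ` (Vk k m \<times> {0..<int (m k)})"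
proof (rule set_eqI, rule iffI)
  fix x assume x: "x \<in> Vk (Suc k) m"
  have "x = (\<lambda>(x, c). x(k := c)) (x(k := 0), x k)" by simp
  moreover have "x(k := 0) \<in> Vk k m" using x by (auto simp: Vk_def)
  moreover have "x k \<in> {0..<int (m k)}" using x by (auto simp: Vk_def)
  ultimately show "x \<in> (\<lambda>(x, c). x(k := c)) ` (Vk k m \<times> {0..<int (m k)})"
    by blast
next
  fix x assume "x \<in> (\<lambda>(x, c). x(k := c)) ` (Vk k m \<times> {0..<int (m k)})"
  then obtain y c where y: "y \<in> Vk k m" "c \<in> {0..<int (m k)}" "x = y(k := c)" by auto
  show "x \<in> Vk (Suc k) m" unfolding Vk_def
  proof (intro CollectI conjI allI impI)
    fix i assume "i < Suc k" then show "0 \<le> x i" "x i < int (m i)"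
      using y by (cases "i = k"; simp add: Vk_def)+
  next
    fix i assume "Suc k \<le> i" then show "x i = 0" using y by (simp add: Vk_def)
  qed
qed

lemma card_Vk: "finite (Vk k m) \<and> card (Vk k m) = (\<Prod>i<k. m i)"
proof (induction k)
  case 0
  have "Vk 0 m = {\<lambda>_. 0}" by (auto simp: Vk_def)
  then show ?case by simp
next
  case (Suc k)
  have inj: "inj_on (\<lambda>(x, c). x(k := c)) (Vk k m \<times> {0..<int (m k)})"
  proof (rule inj_onI, clarsimp)
    fix x c y e assume "x \<in> Vk k m" "y \<in> Vk k m" "x(k := c) = y(k := e)"
    then show "x = y \<and> c = e"
    proof -
      assume a: "x \<in> Vk k m" "y \<in> Vk k m" "x(k := c) = y(k := e)"
      have "c = e" using fun_cong[OF a(3), of k] by simp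
      moreover have "x i = y i" for i
      proof (cases "i = k")
        case True then show ?thesis using a(1,2) by (simp add: Vk_def)
      next
        case False then show ?thesis using fun_cong[OF a(3), of i] by simp
      qed
      ultimately show ?thesis by auto
    qed
  qed
  have fin: "finite (Vk k m \<times> {0..<int (m k)})" using Suc.IH by simp
  have c: "card (Vk k m \<times> {0..<int (m k)}) = (\<Prod>i<k. m i) * m k"
    using Suc.IH by (simp add: card_cartesian_product)
  show ?case unfolding Vk_Suc
  proof
    show "finite ((\<lambda>(x, c). x(k := c)) ` (Vk k m \<times> {0..<int (m k)}))" using fin by (rule finite_imageI)
    show "card ((\<lambda>(x, c). x(k := c)) ` (Vk k m \<times> {0..<int (m k)})) = (\<Prod>i<Suc k. m i)"
      using card_image[OF inj] c by simp
  qed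
qed

lemma vadd_vneg_zero: "x i = y i \<Longrightarrow> vadd m x (vneg m y) i = 0"
  by (simp add: vadd_def vneg_def mod_add_right_eq)

lemma vadd_inj: "inj_on (\<lambda>x. vadd m x g) (Vk k m)"
proof (rule inj_onI)
  fix x y assume x: "x \<in> Vk k m" and y: "y \<in> Vk k m" and e: "vadd m x g = vadd m y g"
  show "x = y"
  proof
    fix i
    show "x i = y i"
    proof (cases "i < k")
      case True
      have "(x i + g i) mod int (m i) = (y i + g i) mod int (m i)"
        using e by (simp add: vadd_def fun_eq_iff)
      then have "x i mod int (m i) = y i mod int (m i)"
        by (metis add_diff_cancel_right' mod_diff_left_eq)
      then show ?thesis using x y True by (simp add: Vk_def)
    next
      case False then show ?thesis using x y by (simp add: Vk_def)
    qed
  qed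
qed

lemma fiber_bound:
  assumes "finite X" "\<And>y. y \<in> f ` X \<Longrightarrow> card {x\<in>X. f x = y} \<le> K"
  shows "card X \<le> card (f ` X) * K"
proof -
  have "X = (\<Union>y\<in>f ` X. {x\<in>X. f x = y})" by auto
  then have "card X \<le> (\<Sum>y\<in>f ` X. card {x\<in>X. f x = y})"
    using card_UN_le[of "f ` X" "\<lambda>y. {x\<in>X. f x = y}"] assms(1) by simp
  also have "\<dots> \<le> card (f ` X) * K"
    using sum_bounded_above[of "f ` X" "\<lambda>y. card {x\<in>X. f x = y}" K] assms(2) by simp
  finally show ?thesis .
qed

lemma cyclic_bound:
  fixes mm :: int
  assumes "mm > 0" "S \<subseteq> {0..<mm}" "T \<subseteq> {0..<mm}" "\<forall>s\<in>S. \<forall>t\<in>T. mm dvd s * t"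
  shows "card S * card T \<le> nat mm"
proof -
  define G where "G = Gcd (insert mm S)"
  have Gdvd: "G dvd mm" "\<forall>s\<in>S. G dvd s" unfolding G_def by (blast intro: Gcd_dvd)+
  have "G \<ge> 0" unfolding G_def by (rule Gcd_int_greater_eq_0)
  moreover have "G \<noteq> 0" using Gdvd(1) assms(1) by auto
  ultimately have Gpos: "G > 0" by simp
  define q where "q = mm div G"
  have mmq: "mm = G * q" using Gdvd(1) unfolding q_def by simp
  have qpos: "q > 0" using mmq Gpos assms(1) by (simp add: zero_less_mult_iff)
  have S: "S \<subseteq> (\<lambda>j. G * j) ` {0..<q}"
  proof
    fix s assume s: "s \<in> S"
    then obtain j where j: "s = G * j" using Gdvd by (meson dvd_def)
    have "0 \<le> j" using s assms(2) j Gpos by (auto simp: zero_le_mult_iff)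
    moreover have "j < q" using s assms(2) j mmq Gpos by auto
    ultimately show "s \<in> (\<lambda>j. G * j) ` {0..<q}" using j by auto
  qed
  have T: "T \<subseteq> (\<lambda>j. q * j) ` {0..<G}"
  proof
    fix t assume t: "t \<in> T"
    have "\<forall>s\<in>insert mm S. mm dvd s * t" using assms(4) t by auto
    then have "mm dvd Gcd ((\<lambda>s. s * t) ` insert mm S)" by (simp add: dvd_Gcd_iff)
    also have "(\<lambda>s. s * t) ` insert mm S = (*) t ` insert mm S" by (auto simp: mult.commute)
    finally have h: "mm dvd Gcd ((*) t ` insert mm S)" .
    have "Gcd ((*) t ` insert mm S) = normalize (t * G)" unfolding G_def by (rule Gcd_mult)
    with h have "mm dvd normalize (t * G)" by (simp only:)
    then have "mm dvd t * G" by (simp only: dvd_normalize_iff)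
    then have "q dvd t" using mmq Gpos by (simp add: mult.commute)
    then obtain j where j: "t = q * j" by (meson dvd_def)
    have "0 \<le> j" using t assms(3) j qpos by (auto simp: zero_le_mult_iff)
    moreover have "j < G" using t assms(3) j mmq qpos by (auto simp: mult.commute)
    ultimately show "t \<in> (\<lambda>j. q * j) ` {0..<G}" using j by auto
  qed
  have "card S \<le> card ((\<lambda>j. G * j) ` {0..<q})" by (rule card_mono) (simp_all add: S)
  also have "\<dots> \<le> card {0..<q}" by (rule card_image_le) simp
  finally have cS: "card S \<le> nat q" by simp
  have "card T \<le> card ((\<lambda>j. q * j) ` {0..<G})" by (rule card_mono) (simp_all add: T)
  also have "\<dots> \<le> card {0..<G}" by (rule card_image_le) simp
  finally have cT: "card T \<le> nat G" by simp
  from cS cT have "card S * card T \<le> nat q * nat G" by (simp add: mult_mono)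
  also have "\<dots> = nat mm" using mmq Gpos qpos by (simp add: nat_mult_distrib[symmetric] mult.commute)
  finally show ?thesis .
qed

lemma orth_bound:
  assumes "\<forall>i. 0 < m i" "\<forall>i<k. \<forall>x. int n dvd a i * x \<longleftrightarrow> int (m i) dvd x"
    "vgrp k m S" "vgrp k m T" "vorth k a n S T"
  shows "card S * card T \<le> (\<Prod>i<k. m i)"
  using assms(2-5)
proof (induction k arbitrary: S T)
  case 0
  have V0: "Vk 0 m = {\<lambda>_. 0}" by (auto simp: Vk_def)
  have sub: "S \<subseteq> {\<lambda>_. 0}" "T \<subseteq> {\<lambda>_. 0}" using 0 unfolding vgrp_def V0 by auto
  have "card S \<le> 1" using card_mono[OF _ sub(1)] by simp
  moreover have "card T \<le> 1" using card_mono[OF _ sub(2)] by simp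
  ultimately show ?case using mult_le_mono[of "card S" 1 "card T" 1] by simp
next
  case (Suc k)
  have SV: "S \<subseteq> Vk (Suc k) m" and TV: "T \<subseteq> Vk (Suc k) m" using Suc.prems by (auto simp: vgrp_def)
  have finS: "finite S" and finT: "finite T" using SV TV card_Vk finite_subset by blast+
  define S0 where "S0 = {x\<in>S. x k = 0}"
  define S1 where "S1 = (\<lambda>x. x k) ` S"
  define T' where "T' = (\<lambda>y. y(k := 0)) ` T"
  define Tz where "Tz = {y\<in>T. \<forall>i<k. y i = 0}"
  define T1 where "T1 = (\<lambda>y. y k) ` Tz"
  have S0V: "S0 \<subseteq> Vk k m"
  proof
    fix x assume x: "x \<in> S0"
    then have xk: "x k = 0" and xV: "x \<in> Vk (Suc k) m" using SV unfolding S0_def by auto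
    show "x \<in> Vk k m" unfolding Vk_def
    proof (intro CollectI conjI allI impI)
      fix i assume "i < k" then show "0 \<le> x i" "x i < int (m i)" using xV by (auto simp: Vk_def)
    next
      fix i assume i: "k \<le> i" show "x i = 0"
      proof (cases "i = k")
        case True then show ?thesis using xk by simp
      next
        case False then have "Suc k \<le> i" using i by simp
        then show ?thesis using xV by (simp add: Vk_def)
      qed
    qed
  qed
  have T'V: "T' \<subseteq> Vk k m" using TV unfolding T'_def Vk_def by auto
  have g1: "vgrp k m S0" using Suc.prems(2) S0V unfolding vgrp_def S0_def
    by (auto simp: vadd_def vneg_def)
  have upd_add: "vadd m (x(k := 0)) (y(k := 0)) = (vadd m x y)(k := 0)" for x y
    by (auto simp: vadd_def fun_eq_iff)
  have upd_neg: "vneg m (x(k := 0)) = (vneg m x)(k := 0)" for x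
    by (auto simp: vneg_def fun_eq_iff)
  have g2: "vgrp k m T'" using Suc.prems(3) T'V unfolding vgrp_def T'_def
    by (auto simp: upd_add upd_neg)
  have o1: "vorth k a n S0 T'"
    unfolding vorth_def
  proof (intro ballI)
    fix x y assume x: "x \<in> S0" and y: "y \<in> T'"
    then obtain z where z: "z \<in> T" "y = z(k := 0)" unfolding T'_def by auto
    have "int n dvd (\<Sum>i<Suc k. a i * x i * z i)" using Suc.prems(4) x z unfolding vorth_def S0_def by auto
    also have "(\<Sum>i<Suc k. a i * x i * z i) = (\<Sum>i<k. a i * x i * y i)"
      using x z unfolding S0_def by simp
    finally show "int n dvd (\<Sum>i<k. a i * x i * y i)" .
  qed
  have IH: "card S0 * card T' \<le> (\<Prod>i<k. m i)"
    using Suc.IH[OF _ g1 g2 o1] Suc.prems(1) by auto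
  have S1b: "S1 \<subseteq> {0..<int (m k)}" using SV unfolding S1_def Vk_def by auto
  have T1b: "T1 \<subseteq> {0..<int (m k)}" using TV unfolding T1_def Tz_def Vk_def by auto
  have dv: "\<forall>s\<in>S1. \<forall>t\<in>T1. int (m k) dvd s * t"
  proof (intro ballI)
    fix s t assume s: "s \<in> S1" and t: "t \<in> T1"
    obtain x where x: "x \<in> S" "s = x k" using s unfolding S1_def by auto
    obtain y where y: "y \<in> Tz" "t = y k" using t unfolding T1_def by auto
    have "int n dvd (\<Sum>i<Suc k. a i * x i * y i)" using Suc.prems(4) x y unfolding vorth_def Tz_def
      by blast
    also have "(\<Sum>i<Suc k. a i * x i * y i) = a k * (s * t)" using x y unfolding Tz_def by simp
    finally show "int (m k) dvd s * t" using Suc.prems(1) by auto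
  qed
  have cyc: "card S1 * card T1 \<le> m k"
    using cyclic_bound[OF _ S1b T1b dv] assms(1) by simp
  have cS: "card S \<le> card S1 * card S0"
    unfolding S1_def
  proof (rule fiber_bound[OF finS])
    fix c assume "c \<in> (\<lambda>x. x k) ` S"
    then obtain x0 where x0: "x0 \<in> S" "x0 k = c" by auto
    have "card {x\<in>S. x k = c} \<le> card S0"
    proof (rule card_inj_on_le[where f = "\<lambda>x. vadd m x (vneg m x0)"])
      show "inj_on (\<lambda>x. vadd m x (vneg m x0)) {x\<in>S. x k = c}"
        by (rule inj_on_subset[OF vadd_inj]) (use SV in auto)
      show "(\<lambda>x. vadd m x (vneg m x0)) ` {x\<in>S. x k = c} \<subseteq> S0"
        using Suc.prems(2) x0 unfolding S0_def vgrp_def by (auto intro: vadd_vneg_zero)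
      show "finite S0" using finS unfolding S0_def by simp
    qed
    then show "card {x\<in>S. x k = c} \<le> card S0" .
  qed
  have cTz: "card Tz = card T1" unfolding T1_def
  proof (rule card_image[symmetric], rule inj_onI)
    fix x y assume x: "x \<in> Tz" and y: "y \<in> Tz" and e: "x k = y k"
    show "x = y"
    proof
      fix i show "x i = y i"
      proof -
        have xV: "x \<in> Vk (Suc k) m" and yV: "y \<in> Vk (Suc k) m" using x y TV unfolding Tz_def by auto
        show ?thesis
        proof (cases "i < k")
          case True then show ?thesis using x y unfolding Tz_def by simp
        next
          case False
          show ?thesis
          proof (cases "i = k")
            case True then show ?thesis using e by simp
          next
            case False2: False
            then have "Suc k \<le> i" using False by simp
            then show ?thesis using xV yV by (simp add: Vk_def)
          qed
        qed
      qed
    qed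
  qed
  have cT: "card T \<le> card T' * card T1"
    unfolding T'_def
  proof (rule fiber_bound[OF finT])
    fix c assume "c \<in> (\<lambda>y. y(k := 0)) ` T"
    then obtain y0 where y0: "y0 \<in> T" "y0(k := 0) = c" by auto
    have "card {y\<in>T. y(k := 0) = c} \<le> card Tz"
    proof (rule card_inj_on_le[where f = "\<lambda>x. vadd m x (vneg m y0)"])
      show "inj_on (\<lambda>x. vadd m x (vneg m y0)) {y\<in>T. y(k := 0) = c}"
        by (rule inj_on_subset[OF vadd_inj]) (use TV in auto)
      show "(\<lambda>x. vadd m x (vneg m y0)) ` {y\<in>T. y(k := 0) = c} \<subseteq> Tz"
      proof (rule image_subsetI)
        fix y assume "y \<in> {y\<in>T. y(k := 0) = c}"
        then have y: "y \<in> T" "y(k := 0) = c" by auto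
        have "\<forall>i<k. y i = y0 i"
        proof (intro allI impI)
          fix i assume "i < k"
          then show "y i = y0 i" using fun_cong[OF trans[OF y(2) y0(2)[symmetric]], of i] by simp
        qed
        then show "vadd m y (vneg m y0) \<in> Tz"
          using Suc.prems(3) y y0 unfolding Tz_def vgrp_def by (auto intro: vadd_vneg_zero)
      qed
      show "finite Tz" using finT unfolding Tz_def by simp
    qed
    then show "card {y\<in>T. y(k := 0) = c} \<le> card T1" using cTz by simp
  qed
  have "card S * card T \<le> (card S1 * card S0) * (card T' * card T1)"
    using cS cT by (simp add: mult_mono)
  also have "\<dots> = (card S0 * card T') * (card S1 * card T1)" by (simp add: ac_simps)
  also have "\<dots> \<le> (\<Prod>i<k. m i) * m k" using IH cyc by (simp add: mult_mono)
  finally show ?case by simp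
qed

lemma Ann_Z_prop:
  assumes "n > 0"
  shows "0 < Ann_Z n a \<and> (\<forall>x. int n dvd a * x \<longleftrightarrow> int (Ann_Z n a) dvd x)"
proof -
  let ?P = "\<lambda>m. m > 0 \<and> [int m * a = 0] (mod int n)"
  have ex: "?P n" using assms by (simp add: cong_0_iff)
  have PA: "?P (Ann_Z n a)" unfolding Ann_Z_def by (rule LeastI[of ?P, OF ex])
  define m where "m = Ann_Z n a"
  have mpos: "m > 0" and mdvd: "int n dvd int m * a" using PA unfolding m_def by (auto simp: cong_0_iff)
  have "int n dvd a * x \<longleftrightarrow> int m dvd x" for x
  proof
    assume h: "int n dvd a * x"
    define x' where "x' = x mod int m"
    have xx: "x = int m * (x div int m) + x'" unfolding x'_def by simp
    have e1: "x' = x - int m * (x div int m)" unfolding x'_def by (simp add: minus_mult_div_eq_mod)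
    have "a * x' = a * (x - int m * (x div int m))" by (subst e1) (rule refl)
    also have "\<dots> = a * x - (int m * a) * (x div int m)" by (simp add: algebra_simps)
    finally have "a * x' = a * x - (int m * a) * (x div int m)" .
    then have d: "int n dvd a * x'" using h mdvd by simp
    have x'b: "0 \<le> x'" "x' < int m" unfolding x'_def using mpos by auto
    show "int m dvd x"
    proof (rule ccontr)
      assume "\<not> int m dvd x"
      then have "x' > 0" using x'b unfolding x'_def by (simp add: dvd_eq_mod_eq_0 order_le_less)
      then have "?P (nat x')" using d by (simp add: cong_0_iff mult.commute)
      then have "Ann_Z n a \<le> nat x'" unfolding Ann_Z_def by (rule Least_le)
      then show False using x'b unfolding m_def by simp
    qed
  next
    assume "int m dvd x"
    then obtain q where "x = int m * q" by (auto elim: dvdE)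
    then have "a * x = (int m * a) * q" by (simp add: algebra_simps)
    moreover have "int n dvd (int m * a) * q" using mdvd by (rule dvd_mult2)
    ultimately show "int n dvd a * x" by (simp only:)
  qed
  then show ?thesis using mpos unfolding m_def by simp
qed

definition psi :: "nat \<Rightarrow> (nat \<Rightarrow> nat \<Rightarrow> int) \<Rightarrow> nat \<Rightarrow> (nat \<Rightarrow> nat) \<Rightarrow> nat \<Rightarrow> (nat \<Rightarrow> int) \<Rightarrow> (nat \<Rightarrow> int)" where
  "psi d E r m s x = (\<lambda>i. if i < r then lin_fun d E (i + s) x mod int (m i) else 0)"

definition omg :: "nat \<Rightarrow> nat \<Rightarrow> (nat \<Rightarrow> nat \<Rightarrow> int) \<Rightarrow> nat \<Rightarrow> (nat \<Rightarrow> int) \<Rightarrow> (nat \<Rightarrow> int) \<Rightarrow> (nat \<Rightarrow> int) \<Rightarrow> int" where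
  "omg d g E r a x y = (\<Sum>i<r. a i * (lin_fun d E i x * lin_fun d E (i + g) y - lin_fun d E (i + g) x * lin_fun d E i y))"

lemma lin_add: "lin_fun d E i (\<lambda>j. x j + y j) = lin_fun d E i x + lin_fun d E i y"
  by (simp add: lin_fun_def algebra_simps sum.distrib)

lemma lin_neg: "lin_fun d E i (\<lambda>j. - x j) = - lin_fun d E i x"
  by (simp add: lin_fun_def sum_negf)

lemma lin_diff: "lin_fun d E i (\<lambda>j. x j - y j) = lin_fun d E i x - lin_fun d E i y"
  by (simp add: lin_fun_def algebra_simps sum_subtractf)

lemma lin_zero: "lin_fun d E i (\<lambda>_. 0) = 0"
  by (simp add: lin_fun_def)

lemma psi_add: "psi d E r m s (\<lambda>j. x j + y j) = vadd m (psi d E r m s x) (psi d E r m s y)"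
  by (auto simp: psi_def vadd_def lin_add mod_add_eq fun_eq_iff)

lemma psi_neg: "psi d E r m s (\<lambda>j. - x j) = vneg m (psi d E r m s x)"
  by (auto simp: psi_def vneg_def lin_neg mod_minus_eq fun_eq_iff)

lemma psi_in: "\<forall>i. 0 < m i \<Longrightarrow> psi d E r m s x \<in> Vk r m"
  by (auto simp: psi_def Vk_def)

lemma vadd_zero: "vadd m (\<lambda>_. 0) (\<lambda>_. 0) = (\<lambda>_. 0)"
  by (simp add: vadd_def)

lemma vneg_zero: "vneg m (\<lambda>_. 0) = (\<lambda>_. 0)"
  by (simp add: vneg_def)

lemma ZV_add: "x \<in> ZV d \<Longrightarrow> y \<in> ZV d \<Longrightarrow> (\<lambda>j. x j + y j) \<in> ZV d"
  by (simp add: ZV_def)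

lemma ZV_diff: "x \<in> ZV d \<Longrightarrow> y \<in> ZV d \<Longrightarrow> (\<lambda>j. x j - y j) \<in> ZV d"
  by (simp add: ZV_def)

lemma ZV_neg: "x \<in> ZV d \<Longrightarrow> (\<lambda>j. - x j) \<in> ZV d"
  by (simp add: ZV_def)

lemma coset_sub:
  assumes "sublattice d L" "(\<lambda>j. v j - w j) \<in> L"
  shows "(\<lambda>x. (\<lambda>j. v j + x j)) ` L \<subseteq> (\<lambda>x. (\<lambda>j. w j + x j)) ` L"
proof
  fix z assume "z \<in> (\<lambda>x. (\<lambda>j. v j + x j)) ` L"
  then obtain x where x: "x \<in> L" "z = (\<lambda>j. v j + x j)" by auto
  show "z \<in> (\<lambda>x. (\<lambda>j. w j + x j)) ` L"
  proof (rule image_eqI)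
    show "(\<lambda>j. (v j - w j) + x j) \<in> L" using assms x unfolding sublattice_def by auto
    show "z = (\<lambda>x. (\<lambda>j. w j + x j)) (\<lambda>j. (v j - w j) + x j)" using x by auto
  qed
qed

lemma coset_eq:
  assumes "sublattice d L" "(\<lambda>j. v j - w j) \<in> L"
  shows "(\<lambda>x. (\<lambda>j. v j + x j)) ` L = (\<lambda>x. (\<lambda>j. w j + x j)) ` L"
proof
  show "(\<lambda>x. (\<lambda>j. v j + x j)) ` L \<subseteq> (\<lambda>x. (\<lambda>j. w j + x j)) ` L" using coset_sub[OF assms] .
  have "(\<lambda>j. - (v j - w j)) \<in> L" using assms unfolding sublattice_def by auto
  then have "(\<lambda>j. w j - v j) \<in> L" by simp
  then show "(\<lambda>x. (\<lambda>j. w j + x j)) ` L \<subseteq> (\<lambda>x. (\<lambda>j. v j + x j)) ` L" using coset_sub[OF assms(1)] by blast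
qed

lemma card_image_factor:
  assumes "finite (h ` A)" "\<forall>v\<in>A. \<forall>w\<in>A. h v = h w \<longrightarrow> c v = c w"
  shows "finite (c ` A) \<and> card (c ` A) \<le> card (h ` A)"
proof -
  have "c ` A = (\<lambda>y. c (SOME v. v \<in> A \<and> h v = y)) ` (h ` A)"
  proof (rule set_eqI, rule iffI)
    fix z assume "z \<in> c ` A"
    then obtain v where v: "v \<in> A" "z = c v" by auto
    have "\<exists>u. u \<in> A \<and> h u = h v" using v by blast
    then have "(SOME u. u \<in> A \<and> h u = h v) \<in> A \<and> h (SOME u. u \<in> A \<and> h u = h v) = h v" by (rule someI_ex)
    then have "c (SOME u. u \<in> A \<and> h u = h v) = c v" using assms(2) v by blast
    then show "z \<in> (\<lambda>y. c (SOME v. v \<in> A \<and> h v = y)) ` (h ` A)" using v by force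
  next
    fix z assume "z \<in> (\<lambda>y. c (SOME v. v \<in> A \<and> h v = y)) ` (h ` A)"
    then obtain v where v: "v \<in> A" "z = c (SOME u. u \<in> A \<and> h u = h v)" by auto
    have "\<exists>u. u \<in> A \<and> h u = h v" using v by blast
    then have "(SOME u. u \<in> A \<and> h u = h v) \<in> A" by (metis (mono_tags, lifting) someI_ex)
    then show "z \<in> c ` A" using v by blast
  qed
  then show ?thesis using assms(1) by (metis card_image_le finite_imageI)
qed

lemma upper:
  assumes mpos: "\<forall>i. 0 < m i" and key: "\<forall>i<r. \<forall>x. int n dvd a i * x \<longleftrightarrow> int (m i) dvd x"
  shows "\<exists>L. finite_index_sublattice d L \<and> lattice_index d L \<le> (\<Prod>i<r. m i) \<and>
           (\<forall>x\<in>L. \<forall>y\<in>L. [omg d g E r a x y = 0] (mod int n))"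
proof -
  define L where "L = {x \<in> ZV d. \<forall>i<r. int (m i) dvd lin_fun d E i x}"
  have sub: "sublattice d L" unfolding sublattice_def L_def
    by (auto simp: ZV_add ZV_neg lin_add lin_neg lin_zero) (simp add: ZV_def)
  have iso: "\<forall>x\<in>L. \<forall>y\<in>L. [omg d g E r a x y = 0] (mod int n)"
  proof (intro ballI)
    fix x y assume x: "x \<in> L" and y: "y \<in> L"
    have "int n dvd omg d g E r a x y" unfolding omg_def
    proof (rule dvd_sum)
      fix i assume "i \<in> {..<r}"
      then have i: "i < r" by simp
      have "int (m i) dvd lin_fun d E i x" "int (m i) dvd lin_fun d E i y" using x y i unfolding L_def by auto
      then have "int (m i) dvd lin_fun d E i x * lin_fun d E (i + g) y - lin_fun d E (i + g) x * lin_fun d E i y"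
        by (simp add: dvd_diff)
      then show "int n dvd a i * (lin_fun d E i x * lin_fun d E (i + g) y - lin_fun d E (i + g) x * lin_fun d E i y)"
        using key i by blast
    qed
    then show "[omg d g E r a x y = 0] (mod int n)" by (simp add: cong_0_iff)
  qed
  define c where "c = (\<lambda>v. (\<lambda>x. (\<lambda>j. v j + x j)) ` L)"
  define h where "h = psi d E r m 0"
  have hV: "h ` ZV d \<subseteq> Vk r m" unfolding h_def using psi_in[OF mpos] by blast
  have finh: "finite (h ` ZV d)" using hV card_Vk finite_subset by blast
  have cardh: "card (h ` ZV d) \<le> (\<Prod>i<r. m i)" using hV card_Vk card_mono by metis
  have eq: "\<forall>v\<in>ZV d. \<forall>w\<in>ZV d. h v = h w \<longrightarrow> c v = c w"
  proof (intro ballI impI)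
    fix v w assume v: "v \<in> ZV d" and w: "w \<in> ZV d" and e: "h v = h w"
    have "(\<lambda>j. v j - w j) \<in> L" unfolding L_def
    proof (intro CollectI conjI allI impI)
      show "(\<lambda>j. v j - w j) \<in> ZV d" using v w by (rule ZV_diff)
      fix i assume i: "i < r"
      have "lin_fun d E i v mod int (m i) = lin_fun d E i w mod int (m i)"
        using fun_cong[OF e, of i] i unfolding h_def psi_def by simp
      then have "int (m i) dvd lin_fun d E i v - lin_fun d E i w" by (simp add: mod_eq_dvd_iff)
      then show "int (m i) dvd lin_fun d E i (\<lambda>j. v j - w j)" by (simp add: lin_diff)
    qed
    then show "c v = c w" unfolding c_def by (rule coset_eq[OF sub])
  qed
  have lc: "lattice_cosets d L = c ` ZV d" unfolding lattice_cosets_def c_def by simp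
  have "finite (c ` ZV d) \<and> card (c ` ZV d) \<le> card (h ` ZV d)"
    by (rule card_image_factor[OF finh eq])
  then have "finite_index_sublattice d L \<and> lattice_index d L \<le> (\<Prod>i<r. m i)"
    using sub cardh lc unfolding finite_index_sublattice_def lattice_index_def by auto
  then show ?thesis using iso by blast
qed

lemma lower:
  assumes mpos: "\<forall>i. 0 < m i" and key: "\<forall>i<r. \<forall>x. int n dvd a i * x \<longleftrightarrow> int (m i) dvd x"
    and rg: "r \<le> g" and db: "dual_basis (2 * g) E" and fis: "finite_index_sublattice (2 * g) L"
    and iso: "\<forall>x\<in>L. \<forall>y\<in>L. [omg (2 * g) g E r a x y = 0] (mod int n)"
  shows "(\<Prod>i<r. m i) \<le> lattice_index (2 * g) L"
proof -
  define d where "d = 2 * g"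
  have db': "dual_basis d E" and fis': "finite_index_sublattice d L"
    and iso': "\<forall>x\<in>L. \<forall>y\<in>L. int n dvd omg d g E r a x y"
    using db fis iso unfolding d_def by (auto simp: cong_0_iff)
  have sub: "sublattice d L" and finC: "finite (lattice_cosets d L)"
    using fis' unfolding finite_index_sublattice_def by auto
  have LZ: "L \<subseteq> ZV d" and zeroL: "(\<lambda>_. 0) \<in> L"
    and addL: "\<And>x y. x \<in> L \<Longrightarrow> y \<in> L \<Longrightarrow> (\<lambda>j. x j + y j) \<in> L"
    and negL: "\<And>x. x \<in> L \<Longrightarrow> (\<lambda>j. - x j) \<in> L"
    using sub unfolding sublattice_def by auto
  define pA where "pA = psi d E r m 0"
  define pB where "pB = psi d E r m g"
  define S where "S = pA ` L"
  define K0 where "K0 = {x\<in>L. pA x = (\<lambda>_. 0)}"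
  define T where "T = pB ` K0"
  define P where "P = (\<Prod>i<r. m i)"
  have Ppos: "P > 0" unfolding P_def using mpos by (simp add: prod_pos)
  have SV: "S \<subseteq> Vk r m" unfolding S_def pA_def using psi_in[OF mpos] by blast
  have TV: "T \<subseteq> Vk r m" unfolding T_def pB_def using psi_in[OF mpos] by blast
  have finV: "finite (Vk r m)" and cardV: "card (Vk r m) = P" using card_Vk unfolding P_def by auto
  have finS: "finite S" using finite_subset[OF SV finV] .
  have finT: "finite T" using finite_subset[OF TV finV] .
  have gS: "vgrp r m S" unfolding vgrp_def
  proof (intro conjI ballI)
    show "S \<subseteq> Vk r m" by (rule SV)
    fix x y assume "x \<in> S" "y \<in> S"
    then obtain x' y' where xy: "x' \<in> L" "y' \<in> L" "x = pA x'" "y = pA y'" unfolding S_def by auto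
    have "vadd m x y = pA (\<lambda>j. x' j + y' j)" using xy unfolding pA_def by (simp add: psi_add)
    moreover have "(\<lambda>j. x' j + y' j) \<in> L" using xy addL by blast
    ultimately show "vadd m x y \<in> S" unfolding S_def by blast
  next
    fix x assume "x \<in> S"
    then obtain x' where xy: "x' \<in> L" "x = pA x'" unfolding S_def by auto
    have "vneg m x = pA (\<lambda>j. - x' j)" using xy unfolding pA_def by (simp add: psi_neg)
    moreover have "(\<lambda>j. - x' j) \<in> L" using xy negL by blast
    ultimately show "vneg m x \<in> S" unfolding S_def by blast
  qed
  have gT: "vgrp r m T" unfolding vgrp_def
  proof (intro conjI ballI)
    show "T \<subseteq> Vk r m" by (rule TV)
    fix x y assume "x \<in> T" "y \<in> T"
    then obtain x' y' where x': "x' \<in> K0" "y' \<in> K0" "x = pB x'" "y = pB y'" unfolding T_def by auto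
    have "(\<lambda>j. x' j + y' j) \<in> K0" using x' addL unfolding K0_def pA_def
      by (simp add: psi_add vadd_zero)
    moreover have "vadd m x y = pB (\<lambda>j. x' j + y' j)" using x' unfolding pB_def by (simp add: psi_add)
    ultimately show "vadd m x y \<in> T" unfolding T_def by blast
  next
    fix x assume "x \<in> T"
    then obtain x' where x': "x' \<in> K0" "x = pB x'" unfolding T_def by auto
    have "(\<lambda>j. - x' j) \<in> K0" using x' negL unfolding K0_def pA_def
      by (simp add: psi_neg vneg_zero)
    moreover have "vneg m x = pB (\<lambda>j. - x' j)" using x' unfolding pB_def by (simp add: psi_neg)
    ultimately show "vneg m x \<in> T" unfolding T_def by blast
  qed
  have oST: "vorth r a n S T" unfolding vorth_def
  proof (intro ballI)
    fix \<alpha> \<beta> assume "\<alpha> \<in> S" "\<beta> \<in> T"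
    then obtain x y where x: "x \<in> L" "\<alpha> = pA x" and y: "y \<in> L" "pA y = (\<lambda>_. 0)" "\<beta> = pB y"
      unfolding S_def T_def K0_def by auto
    define z where "z = (\<lambda>i. (lin_fun d E i x mod int (m i)) * (lin_fun d E (i + g) y mod int (m i))
        - (lin_fun d E i x * lin_fun d E (i + g) y - lin_fun d E (i + g) x * lin_fun d E i y))"
    have zd: "int n dvd a i * z i" if i: "i < r" for i
    proof -
      have "lin_fun d E i y mod int (m i) = 0" using fun_cong[OF y(2), of i] i unfolding pA_def psi_def by simp
      then have my: "int (m i) dvd lin_fun d E i y" by (simp add: dvd_eq_mod_eq_0)
      have "((lin_fun d E i x mod int (m i)) * (lin_fun d E (i + g) y mod int (m i))) mod int (m i)
          = (lin_fun d E i x * lin_fun d E (i + g) y) mod int (m i)" by (simp add: mod_mult_eq)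
      then have m1: "int (m i) dvd (lin_fun d E i x mod int (m i)) * (lin_fun d E (i + g) y mod int (m i))
          - lin_fun d E i x * lin_fun d E (i + g) y" by (simp add: mod_eq_dvd_iff)
      have m2: "int (m i) dvd lin_fun d E (i + g) x * lin_fun d E i y" using my by (rule dvd_mult)
      have "z i = ((lin_fun d E i x mod int (m i)) * (lin_fun d E (i + g) y mod int (m i))
          - lin_fun d E i x * lin_fun d E (i + g) y) + lin_fun d E (i + g) x * lin_fun d E i y"
        unfolding z_def by simp
      then have "int (m i) dvd z i" using m1 m2 by (simp add: dvd_add)
      then show ?thesis using key i by blast
    qed
    have "(\<Sum>i<r. a i * \<alpha> i * \<beta> i) = (\<Sum>i<r. a i * z i + a i * (lin_fun d E i x * lin_fun d E (i + g) y - lin_fun d E (i + g) x * lin_fun d E i y))"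
    proof (rule sum.cong)
      fix i assume "i \<in> {..<r}"
      then show "a i * \<alpha> i * \<beta> i = a i * z i + a i * (lin_fun d E i x * lin_fun d E (i + g) y - lin_fun d E (i + g) x * lin_fun d E i y)"
        using x y unfolding z_def pA_def pB_def psi_def by (simp add: algebra_simps)
    qed simp
    also have "\<dots> = (\<Sum>i<r. a i * z i) + omg d g E r a x y" unfolding omg_def by (simp add: sum.distrib)
    finally have eqn: "(\<Sum>i<r. a i * \<alpha> i * \<beta> i) = (\<Sum>i<r. a i * z i) + omg d g E r a x y" .
    have d1: "int n dvd (\<Sum>i<r. a i * z i)" by (rule dvd_sum) (use zd in simp)
    have d2: "int n dvd omg d g E r a x y" using iso' x y by blast
    show "int n dvd (\<Sum>i<r. a i * \<alpha> i * \<beta> i)" unfolding eqn using d1 d2 by (rule dvd_add)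
  qed
  have bound: "card S * card T \<le> P" unfolding P_def by (rule orth_bound[OF mpos key gS gT oST])
  define cs where "cs = (\<lambda>v. (\<lambda>x. (\<lambda>j. v j + x j)) ` L)"
  define rep where "rep = (\<lambda>C. SOME v. v \<in> ZV d \<and> C = cs v)"
  define xs where "xs = (\<lambda>s. SOME x. x \<in> L \<and> pA x = s)"
  define F where "F = (\<lambda>(C, s, t). (vadd m (pA (rep C)) s, vadd m (vadd m (pB (rep C)) (pB (xs s))) t))"
  have surj: "Vk r m \<times> Vk r m \<subseteq> F ` (lattice_cosets d L \<times> S \<times> T)"
  proof clarify
    fix \<alpha> \<beta> assume \<alpha>: "\<alpha> \<in> Vk r m" and \<beta>: "\<beta> \<in> Vk r m"
    define u where "u = (\<lambda>j. if j < r then \<alpha> j else if g \<le> j \<and> j < g + r then \<beta> (j - g) else (0::int))"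
    have uZ: "u \<in> ZV d" unfolding ZV_def u_def d_def using rg by auto
    have "bij_betw (\<lambda>x i. if i < d then lin_fun d E i x else 0) (ZV d) (ZV d)"
      using db' unfolding dual_basis_def .
    then have "u \<in> (\<lambda>x i. if i < d then lin_fun d E i x else 0) ` ZV d"
      using uZ by (simp add: bij_betw_def)
    then obtain y where y: "y \<in> ZV d" "(\<lambda>i. if i < d then lin_fun d E i y else 0) = u" by auto
    have ly: "lin_fun d E i y = u i" if "i < d" for i using fun_cong[OF y(2), of i] that by simp
    have pAy: "pA y = \<alpha>"
    proof
      fix i show "pA y i = \<alpha> i"
      proof (cases "i < r")
        case True
        then have "i < d" using rg unfolding d_def by simp
        then show ?thesis using True ly \<alpha> unfolding pA_def psi_def u_def Vk_def by simp
      next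
        case False then show ?thesis using \<alpha> unfolding pA_def psi_def Vk_def by simp
      qed
    qed
    have pBy: "pB y = \<beta>"
    proof
      fix i show "pB y i = \<beta> i"
      proof (cases "i < r")
        case True
        then have "i + g < d" using rg unfolding d_def by simp
        moreover have "u (i + g) = \<beta> i" using True rg unfolding u_def by simp
        ultimately show ?thesis using True ly \<beta> unfolding pB_def psi_def Vk_def by simp
      next
        case False then show ?thesis using \<beta> unfolding pB_def psi_def Vk_def by simp
      qed
    qed
    define C where "C = cs y"
    have CC: "C \<in> lattice_cosets d L" unfolding C_def cs_def lattice_cosets_def using y(1) by blast
    have "\<exists>v. v \<in> ZV d \<and> C = cs v" using y(1) C_def by blast
    then have v: "rep C \<in> ZV d \<and> C = cs (rep C)" unfolding rep_def by (rule someI_ex)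
    define v where "v = rep C"
    have "y \<in> cs y" unfolding cs_def
    proof (rule image_eqI)
      show "y = (\<lambda>j. y j + (\<lambda>_. 0) j)" by simp
    qed (rule zeroL)
    then have "y \<in> cs v" using v unfolding v_def C_def by simp
    then obtain z where z: "z \<in> L" "y = (\<lambda>j. v j + z j)" unfolding cs_def by auto
    define s where "s = pA z"
    have sS: "s \<in> S" unfolding s_def S_def using z by blast
    have "\<exists>x. x \<in> L \<and> pA x = s" using z s_def by blast
    then have x0: "xs s \<in> L \<and> pA (xs s) = s" unfolding xs_def by (rule someI_ex)
    define x0 where "x0 = xs s"
    define w where "w = (\<lambda>j. z j + - x0 j)"
    have wL: "w \<in> L" unfolding w_def using addL negL z x0 x0_def by blast
    have e1: "pA w = vadd m (pA z) (pA (\<lambda>j. - x0 j))" unfolding w_def pA_def by (rule psi_add)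
    have e2: "pA (\<lambda>j. - x0 j) = vneg m (pA x0)" unfolding pA_def by (rule psi_neg)
    have "pA w = vadd m (pA z) (vneg m (pA x0))" using e1 e2 by simp
    also have "\<dots> = (\<lambda>_. 0)" using x0 unfolding x0_def s_def by (auto intro: vadd_vneg_zero)
    finally have "w \<in> K0" using wL unfolding K0_def by simp
    define t where "t = pB w"
    have tT: "t \<in> T" unfolding t_def T_def using \<open>w \<in> K0\<close> by blast
    have f1: "vadd m (pA v) s = \<alpha>" unfolding s_def pA_def
      by (simp add: psi_add[symmetric] z(2)[symmetric] pAy[unfolded pA_def])
    have "vadd m (vadd m (pB v) (pB x0)) t = pB (\<lambda>j. (v j + x0 j) + w j)"
      unfolding t_def pB_def by (simp add: psi_add)
    also have "(\<lambda>j. (v j + x0 j) + w j) = y" unfolding w_def z(2) by auto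
    finally have f2: "vadd m (vadd m (pB v) (pB x0)) t = \<beta>" using pBy by simp
    have "F (C, s, t) = (\<alpha>, \<beta>)" unfolding F_def using f1 f2 v_def x0_def by simp
    then show "(\<alpha>, \<beta>) \<in> F ` (lattice_cosets d L \<times> S \<times> T)" using CC sS tT by force
  qed
  have "P * P = card (Vk r m \<times> Vk r m)" using cardV by (simp add: card_cartesian_product)
  also have "\<dots> \<le> card (F ` (lattice_cosets d L \<times> S \<times> T))"
    by (rule card_mono[OF _ surj]) (simp add: finC finS finT finite_cartesian_product)
  also have "\<dots> \<le> card (lattice_cosets d L \<times> S \<times> T)" by (rule card_image_le) (simp add: finC finS finT)
  also have "\<dots> = lattice_index d L * (card S * card T)"
    unfolding lattice_index_def by (simp add: card_cartesian_product)
  also have "\<dots> \<le> lattice_index d L * P" using bound by simp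
  finally have "P * P \<le> lattice_index d L * P" .
  then have "P \<le> lattice_index d L" using Ppos by simp
  then show ?thesis unfolding P_def d_def .
qed

theorem lemma3p3:
  fixes g r n :: nat and a :: "nat \<Rightarrow> int" and E :: "nat \<Rightarrow> nat \<Rightarrow> int"
  assumes "n > 0"
    and "dual_basis (2 * g) E"
    and "r \<le> g"
    and "\<forall>i<r. \<not> [a i = 0] (mod int n)"
  shows "Ann_form n (2 * g)
           (\<lambda>x y. \<Sum>i<r. a i * (lin_fun (2 * g) E i x * lin_fun (2 * g) E (i + g) y
                               - lin_fun (2 * g) E (i + g) x * lin_fun (2 * g) E i y))
         = (\<Prod>i<r. Ann_Z n (a i))"
proof -
  define m where "m = (\<lambda>i. Ann_Z n (a i))"
  have mpos: "\<forall>i. 0 < m i" using Ann_Z_prop[OF assms(1)] unfolding m_def by blast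
  have key: "\<forall>i<r. \<forall>x. int n dvd a i * x \<longleftrightarrow> int (m i) dvd x"
    using Ann_Z_prop[OF assms(1)] unfolding m_def by blast
  have om: "(\<lambda>x y. \<Sum>i<r. a i * (lin_fun (2 * g) E i x * lin_fun (2 * g) E (i + g) y
                               - lin_fun (2 * g) E (i + g) x * lin_fun (2 * g) E i y))
      = omg (2 * g) g E r a" by (intro ext) (simp add: omg_def)
  define Q where "Q = (\<lambda>k. \<exists>L. finite_index_sublattice (2 * g) L \<and> lattice_index (2 * g) L = k \<and>
       (\<forall>x\<in>L. \<forall>y\<in>L. [omg (2 * g) g E r a x y = 0] (mod int n)))"
  have AF: "Ann_form n (2 * g) (omg (2 * g) g E r a) = Least Q" unfolding Ann_form_def Q_def by simp
  obtain L0 where L0: "finite_index_sublattice (2 * g) L0" "lattice_index (2 * g) L0 \<le> (\<Prod>i<r. m i)"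
    "\<forall>x\<in>L0. \<forall>y\<in>L0. [omg (2 * g) g E r a x y = 0] (mod int n)"
    using upper[OF mpos key, of "2 * g" g E] by blast
  have "(\<Prod>i<r. m i) \<le> lattice_index (2 * g) L0"
    using lower[OF mpos key assms(3) assms(2) L0(1) L0(3)] .
  then have QP: "Q (\<Prod>i<r. m i)" unfolding Q_def using L0 by (intro exI[of _ L0]) simp
  have le1: "Least Q \<le> (\<Prod>i<r. m i)" using QP by (rule Least_le)
  have "Q (Least Q)" using QP by (rule LeastI)
  then obtain L where L: "finite_index_sublattice (2 * g) L" "lattice_index (2 * g) L = Least Q"
    "\<forall>x\<in>L. \<forall>y\<in>L. [omg (2 * g) g E r a x y = 0] (mod int n)" unfolding Q_def by blast
  have le2: "(\<Prod>i<r. m i) \<le> Least Q"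
    using lower[OF mpos key assms(3) assms(2) L(1) L(3)] L(2) by simp
  show ?thesis unfolding om AF using le1 le2 unfolding m_def by simp
qed

end
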